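(* Let $k$ be a field, $M$ a regular matroid of rank $r$ on $E=\{e_1<\cdots<e_n\}$ with basis $B=\{e_{n-r+1},\ldots,e_n\}$ and an admissible signed fundamental cocircuit incidence matrix $(a^*_{ji})$ w.r.t. $B$. Label the circuits $C_1,\ldots,C_m$ of $M$ so that $C_i=\mathrm{ci}(B,e_i)$ for $1\le i\le n-r$. Define $d_j=j$ for $j\le n-r$ and $d_j=\min\{i: e_i\in\mathrm{coc}(B,e_j)\}$ for $j\ge n-r+1$, and set $m_{C_i}=x_i^{|\overline{C}_i|}$ if $i\le n-r$ and $m_{C_i}=\prod_{e_j\in\overline{C}_i}x_{d_j}$ if $i\ge n-r+1$. Let $p_C$ be the polynomial obtained from $\prod_{e_j\in\overline{C}}x_j$ by substituting, for every $j\ge n-r+1$, $x_j=-(a^*_{jj})^{-1}\sum_{e_i\in\mathrm{coc}(B,e_j),\,i\ne j}a^*_{ji}x_i$. Then for every circuit $C$ of $M$, the monomial $m_C$ occurs (up to sign) as a term of $p_C$.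
   Context: For $e\notin B$, $\mathrm{ci}(B,e)$ is the unique circuit contained in $B\cup\{e\}$; for $b\in B$, $\mathrm{coc}(B,b)$ is the unique cocircuit contained in $(E\setminus B)\cup\{b\}$ and containing $b$. $\overline{C}=C\setminus\{\min C\}$. The fundamental cocircuit incidence matrix has rows indexed by $\mathrm{coc}(B,e_j)$, $e_j\in B$, columns by $e_1,\ldots,e_n$, with $0/1$ incidence entries. A signing replaces some $1$'s by $-1$; it is admissible over $k$ if it is the restriction of a signing of the full cocircuit incidence matrix for which some signing of the full circuit incidence matrix satisfies $\widetilde{\mathcal{A}}_M(\mathcal{C})\widetilde{\mathcal{A}}_M(\mathcal{C}^* )^T=0$ over $k$. *)

theory Defs
  imports "Jordan_Normal_Form.Determinant" "HOL-Library.Poly_Mapping"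
begin

definition matroid :: "nat set \<Rightarrow> (nat set \<Rightarrow> bool) \<Rightarrow> bool" where
  "matroid E ind \<longleftrightarrow> finite E \<and> ind {} \<and>
     (\<forall>X. ind X \<longrightarrow> X \<subseteq> E) \<and>
     (\<forall>X Y. ind Y \<and> X \<subseteq> Y \<longrightarrow> ind X) \<and>
     (\<forall>X Y. ind X \<and> ind Y \<and> card X < card Y \<longrightarrow> (\<exists>y\<in>Y - X. ind (insert y X)))"

definition basis :: "nat set \<Rightarrow> (nat set \<Rightarrow> bool) \<Rightarrow> nat set \<Rightarrow> bool" where
  "basis E ind B \<longleftrightarrow> ind B \<and> (\<forall>X. ind X \<and> B \<subseteq> X \<longrightarrow> X = B)"

definition circuit :: "nat set \<Rightarrow> (nat set \<Rightarrow> bool) \<Rightarrow> nat set \<Rightarrow> bool" where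
  "circuit E ind C \<longleftrightarrow> C \<subseteq> E \<and> \<not> ind C \<and> (\<forall>D. D \<subset> C \<longrightarrow> ind D)"

definition cocircuit :: "nat set \<Rightarrow> (nat set \<Rightarrow> bool) \<Rightarrow> nat set \<Rightarrow> bool" where
  "cocircuit E ind D \<longleftrightarrow> D \<subseteq> E \<and> (\<forall>B. basis E ind B \<longrightarrow> D \<inter> B \<noteq> {}) \<and>
     (\<forall>D'. D' \<subset> D \<longrightarrow> (\<exists>B. basis E ind B \<and> D' \<inter> B = {}))"

definition ci :: "nat set \<Rightarrow> (nat set \<Rightarrow> bool) \<Rightarrow> nat set \<Rightarrow> nat \<Rightarrow> nat set" where
  "ci E ind B e = (THE C. circuit E ind C \<and> C \<subseteq> insert e B)"

definition coc :: "nat set \<Rightarrow> (nat set \<Rightarrow> bool) \<Rightarrow> nat set \<Rightarrow> nat \<Rightarrow> nat set" where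
  "coc E ind B b = (THE D. cocircuit E ind D \<and> D \<subseteq> insert b (E - B) \<and> b \<in> D)"

definition totally_unimodular :: "nat \<Rightarrow> nat set \<Rightarrow> (nat \<Rightarrow> nat \<Rightarrow> int) \<Rightarrow> bool" where
  "totally_unimodular d E A \<longleftrightarrow>
     (\<forall>k f g. inj_on f {..<k} \<and> f ` {..<k} \<subseteq> {..<d} \<and> inj_on g {..<k} \<and> g ` {..<k} \<subseteq> E \<longrightarrow>
        det (mat k k (\<lambda>(a, b). A (f a) (g b))) \<in> {-1, 0, 1})"

definition real_lin_indep_cols :: "nat \<Rightarrow> (nat \<Rightarrow> nat \<Rightarrow> int) \<Rightarrow> nat set \<Rightarrow> bool" where
  "real_lin_indep_cols d A S \<longleftrightarrow>
     (\<forall>c :: nat \<Rightarrow> real. (\<forall>i<d. (\<Sum>e\<in>S. c e * real_of_int (A i e)) = 0) \<longrightarrow> (\<forall>e\<in>S. c e = 0))"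

definition regular :: "nat set \<Rightarrow> (nat set \<Rightarrow> bool) \<Rightarrow> bool" where
  "regular E ind \<longleftrightarrow> (\<exists>d A. totally_unimodular d E A \<and>
     (\<forall>X. ind X \<longleftrightarrow> X \<subseteq> E \<and> real_lin_indep_cols d A X))"

definition signing :: "(nat set \<Rightarrow> bool) \<Rightarrow> (nat set \<Rightarrow> nat \<Rightarrow> 'k::ring_1) \<Rightarrow> bool" where
  "signing P s \<longleftrightarrow> (\<forall>X. P X \<longrightarrow> (\<forall>e. (e \<in> X \<longrightarrow> s X e = 1 \<or> s X e = -1) \<and> (e \<notin> X \<longrightarrow> s X e = 0)))"

definition admissible_fund_signing ::
  "nat set \<Rightarrow> (nat set \<Rightarrow> bool) \<Rightarrow> nat set \<Rightarrow> (nat \<Rightarrow> nat \<Rightarrow> 'k::field) \<Rightarrow> bool" where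
  "admissible_fund_signing E ind B a \<longleftrightarrow>
     (\<exists>(sC :: nat set \<Rightarrow> nat \<Rightarrow> 'k) (sD :: nat set \<Rightarrow> nat \<Rightarrow> 'k).
        signing (circuit E ind) sC \<and> signing (cocircuit E ind) sD \<and>
        (\<forall>C D. circuit E ind C \<and> cocircuit E ind D \<longrightarrow> (\<Sum>e\<in>E. sC C e * sD D e) = 0) \<and>
        (\<forall>j\<in>B. \<forall>i\<in>E. a j i = sD (coc E ind B j) i))"

type_synonym 'k mpoly = "(nat \<Rightarrow>\<^sub>0 nat) \<Rightarrow>\<^sub>0 'k"

definition Var :: "nat \<Rightarrow> 'k::{zero,one} mpoly" where
  "Var i = Poly_Mapping.single (Poly_Mapping.single i 1) 1"

definition cbar :: "nat set \<Rightarrow> nat set" where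
  "cbar C = C - {Min C}"

definition dd :: "nat set \<Rightarrow> (nat set \<Rightarrow> bool) \<Rightarrow> nat set \<Rightarrow> nat \<Rightarrow> nat" where
  "dd E ind B j = (if j \<in> B then Min (coc E ind B j) else j)"

definition mC :: "nat \<Rightarrow> nat \<Rightarrow> (nat set \<Rightarrow> bool) \<Rightarrow> nat set \<Rightarrow> (nat \<Rightarrow>\<^sub>0 nat)" where
  "mC n r ind C =
    (let E = {1..n}; B = {n - r + 1..n} in
     if (\<exists>i\<in>{1..n - r}. C = ci E ind B i)
     then Poly_Mapping.single (THE i. i \<in> {1..n - r} \<and> C = ci E ind B i) (card (cbar C))
     else (\<Sum>j\<in>cbar C. Poly_Mapping.single (dd E ind B j) 1))"

definition pC :: "nat \<Rightarrow> nat \<Rightarrow> (nat set \<Rightarrow> bool) \<Rightarrow> (nat \<Rightarrow> nat \<Rightarrow> 'k::field) \<Rightarrow> nat set \<Rightarrow> 'k mpoly" where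
  "pC n r ind a C =
    (let E = {1..n}; B = {n - r + 1..n} in
     \<Prod>j\<in>cbar C. (if j \<in> B
                   then - (\<Sum>i\<in>coc E ind B j - {j}.
                            Poly_Mapping.single (Poly_Mapping.single i 1) (inverse (a j j) * a j i))
                   else Var j))"

end

theory Submission
  imports Defs
begin


lemma lookup_sum_single_card:
  "finite S \<Longrightarrow> Poly_Mapping.lookup (\<Sum>j\<in>S. Poly_Mapping.single (f j) (1::nat)) l = card {j\<in>S. f j = l}"
proof (induction S rule: finite_induct)
  case empty then show ?case by simp
next
  case (insert x F)
  have "{j\<in>insert x F. f j = l} = (if f x = l then insert x {j\<in>F. f j = l} else {j\<in>F. f j = l})" by auto
  then show ?case using insert by (auto simp: Poly_Mapping.lookup_add Poly_Mapping.lookup_single when_def)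
qed

lemma prod_single_mp:
  fixes g :: "nat \<Rightarrow> 'k::comm_ring_1"
  shows "finite S \<Longrightarrow> (\<Prod>j\<in>S. Poly_Mapping.single (Poly_Mapping.single (f j) (1::nat)) (g j))
     = Poly_Mapping.single (\<Sum>j\<in>S. Poly_Mapping.single (f j) 1) (\<Prod>j\<in>S. g j)"
proof (induction S rule: finite_induct)
  case empty then show ?case by (simp add: one_poly_mapping.abs_eq single.abs_eq)
next
  case (insert x F)
  then show ?case by (simp add: mult_single)
qed

lemma coeff_prod_linear:
  fixes c :: "nat \<Rightarrow> nat \<Rightarrow> 'k::comm_ring_1" and t :: "nat \<Rightarrow> nat"
  assumes S: "finite S" and A: "\<And>j. j\<in>S \<Longrightarrow> finite (A j)" and t: "\<And>j. j\<in>S \<Longrightarrow> t j \<in> A j"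
    and uniq: "\<And>f. (\<forall>j\<in>S. f j \<in> A j) \<Longrightarrow> (\<Sum>j\<in>S. Poly_Mapping.single (f j) (1::nat)) = (\<Sum>j\<in>S. Poly_Mapping.single (t j) (1::nat)) \<Longrightarrow> \<forall>j\<in>S. f j = t j"
  shows "Poly_Mapping.lookup (\<Prod>j\<in>S. \<Sum>l\<in>A j. Poly_Mapping.single (Poly_Mapping.single l (1::nat)) (c j l)) (\<Sum>j\<in>S. Poly_Mapping.single (t j) (1::nat))
     = (\<Prod>j\<in>S. c j (t j))"
proof -
  let ?T = "\<Sum>j\<in>S. Poly_Mapping.single (t j) (1::nat)"
  have "(\<Prod>j\<in>S. \<Sum>l\<in>A j. Poly_Mapping.single (Poly_Mapping.single l (1::nat)) (c j l))
     = (\<Sum>g\<in>PiE S A. \<Prod>j\<in>S. Poly_Mapping.single (Poly_Mapping.single (g j) (1::nat)) (c j (g j)))"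
    by (rule prod_sum_PiE[OF S A])
  also have "\<dots> = (\<Sum>g\<in>PiE S A. Poly_Mapping.single (\<Sum>j\<in>S. Poly_Mapping.single (g j) (1::nat)) (\<Prod>j\<in>S. c j (g j)))"
    by (simp only: prod_single_mp[OF S])
  finally have eq: "(\<Prod>j\<in>S. \<Sum>l\<in>A j. Poly_Mapping.single (Poly_Mapping.single l (1::nat)) (c j l)) = \<dots>" .
  let ?t = "restrict t S"
  have tin: "?t \<in> PiE S A" using t by auto
  have fin: "finite (PiE S A)" using S A by (simp add: finite_PiE)
  have "Poly_Mapping.lookup (\<Sum>g\<in>PiE S A. Poly_Mapping.single (\<Sum>j\<in>S. Poly_Mapping.single (g j) (1::nat)) (\<Prod>j\<in>S. c j (g j))) ?T
      = (\<Sum>g\<in>PiE S A. ((\<Prod>j\<in>S. c j (g j)) when (\<Sum>j\<in>S. Poly_Mapping.single (g j) (1::nat)) = ?T))"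
    by (simp add: Poly_Mapping.lookup_sum Poly_Mapping.lookup_single)
  also have "\<dots> = ((\<Prod>j\<in>S. c j (?t j)) when (\<Sum>j\<in>S. Poly_Mapping.single (?t j) (1::nat)) = ?T)"
  proof (rule sum.remove[OF fin tin, THEN trans])
    have "(\<Sum>g\<in>PiE S A - {?t}. ((\<Prod>j\<in>S. c j (g j)) when (\<Sum>j\<in>S. Poly_Mapping.single (g j) (1::nat)) = ?T)) = 0"
    proof (rule sum.neutral, rule ballI)
      fix g assume g: "g \<in> PiE S A - {?t}"
      have "(\<Sum>j\<in>S. Poly_Mapping.single (g j) (1::nat)) \<noteq> ?T"
      proof
        assume "(\<Sum>j\<in>S. Poly_Mapping.single (g j) (1::nat)) = ?T"
        with uniq[of g] g have "\<forall>j\<in>S. g j = t j" by (auto simp: PiE_def)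
        moreover have "g \<noteq> ?t" "\<forall>x. x \<notin> S \<longrightarrow> g x = undefined" using g by (auto simp: PiE_def extensional_def)
        ultimately show False unfolding fun_eq_iff restrict_def by (metis (full_types))
      qed
      then show "((\<Prod>j\<in>S. c j (g j)) when (\<Sum>j\<in>S. Poly_Mapping.single (g j) (1::nat)) = ?T) = 0" by simp
    qed
    then show "((\<Prod>j\<in>S. c j (?t j)) when (\<Sum>j\<in>S. Poly_Mapping.single (?t j) (1::nat)) = ?T) +
      (\<Sum>g\<in>PiE S A - {?t}. ((\<Prod>j\<in>S. c j (g j)) when (\<Sum>j\<in>S. Poly_Mapping.single (g j) (1::nat)) = ?T))
      = ((\<Prod>j\<in>S. c j (?t j)) when (\<Sum>j\<in>S. Poly_Mapping.single (?t j) (1::nat)) = ?T)" by simp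
  qed
  also have "\<dots> = (\<Prod>j\<in>S. c j (t j))" by simp
  finally show ?thesis using eq by simp
qed




lemma sum_eq_from_single:
  fixes f g :: "nat \<Rightarrow> nat"
  assumes S: "finite S" and eq: "(\<Sum>j\<in>S. Poly_Mapping.single (f j) (1::nat)) = (\<Sum>j\<in>S. Poly_Mapping.single (g j) 1)"
  shows "(\<Sum>j\<in>S. f j) = (\<Sum>j\<in>S. g j)"
proof -
  have cnt: "card {j\<in>S. f j = l} = card {j\<in>S. g j = l}" for l
    using arg_cong[OF eq, of "\<lambda>m. Poly_Mapping.lookup m l"] lookup_sum_single_card[OF S] by metis
  let ?T = "f ` S \<union> g ` S"
  have fT: "finite ?T" using S by simp
  have "(\<Sum>j\<in>S. f j) = (\<Sum>l\<in>?T. \<Sum>j\<in>{x. x \<in> S \<and> f x = l}. f j)"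
    by (rule sum.group[symmetric, OF S fT]) auto
  also have "\<dots> = (\<Sum>l\<in>?T. l * card {j\<in>S. f j = l})" by (rule sum.cong) auto
  also have "\<dots> = (\<Sum>l\<in>?T. l * card {j\<in>S. g j = l})" using cnt by simp
  also have "\<dots> = (\<Sum>l\<in>?T. \<Sum>j\<in>{x. x \<in> S \<and> g x = l}. g j)" by (rule sum.cong) auto
  also have "\<dots> = (\<Sum>j\<in>S. g j)"
    by (rule sum.group[OF S fT]) auto
  finally show ?thesis .
qed

lemma pm1_prod:
  fixes h :: "nat \<Rightarrow> 'k::comm_ring_1"
  shows "finite S \<Longrightarrow> (\<And>j. j \<in> S \<Longrightarrow> h j \<in> {1, -1}) \<Longrightarrow> (\<Prod>j\<in>S. h j) \<in> {1, -1}"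
proof (induction S rule: finite_induct)
  case empty then show ?case by simp
next
  case (insert x F)
  then have hx: "h x = 1 \<or> h x = -1" and pF: "prod h F = 1 \<or> prod h F = -1" by auto
  show ?case unfolding prod.insert[OF insert(1,2)] using hx pF by (elim disjE) auto
qed

lemma pm1_coef:
  fixes x y :: "'k::field"
  shows "x \<in> {1,-1} \<Longrightarrow> y \<in> {1,-1} \<Longrightarrow> - (inverse y * x) \<in> {1,-1}"
  by auto

lemma orth:
  fixes a :: "nat \<Rightarrow> nat \<Rightarrow> 'k::field"
  assumes adm: "admissible_fund_signing E ind B a" and fE: "finite E"
    and C: "circuit E ind C" and D: "cocircuit E ind D" and e: "e \<in> C" "e \<in> D"
  shows "\<exists>e'\<in>C \<inter> D. e' \<noteq> e"
proof (rule ccontr)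
  assume no: "\<not> (\<exists>e'\<in>C \<inter> D. e' \<noteq> e)"
  obtain sC sD :: "nat set \<Rightarrow> nat \<Rightarrow> 'k" where sC: "signing (circuit E ind) sC" and sD: "signing (cocircuit E ind) sD"
    and o: "\<forall>C D. circuit E ind C \<and> cocircuit E ind D \<longrightarrow> (\<Sum>x\<in>E. sC C x * sD D x) = 0"
    using adm unfolding admissible_fund_signing_def by blast
  have CE: "C \<subseteq> E" using C unfolding circuit_def by auto
  have eE: "e \<in> E" using CE e by auto
  have zero: "sC C x * sD D x = 0" if "x \<in> E - {e}" for x
  proof (cases "x \<in> C")
    case True
    then have "x \<notin> D" using no that by auto
    then show ?thesis using sD D unfolding signing_def by auto
  next
    case False
    then show ?thesis using sC C unfolding signing_def by auto
  qed
  have "(\<Sum>x\<in>E. sC C x * sD D x) = sC C e * sD D e + (\<Sum>x\<in>E - {e}. sC C x * sD D x)"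
    by (rule sum.remove[OF fE eE])
  also have "(\<Sum>x\<in>E - {e}. sC C x * sD D x) = 0" using zero by (rule sum.neutral[OF ballI])
  finally have "sC C e * sD D e = 0" using o C D by simp
  moreover have "sC C e \<in> {1,-1}" "sD D e \<in> {1,-1}"
    using sC C sD D e unfolding signing_def by auto
  ultimately show False by auto
qed

lemma min_card_set:
  assumes "finite X" "P X"
  obtains Y where "Y \<subseteq> X" "P Y" "\<And>Z. Z \<subseteq> X \<Longrightarrow> P Z \<Longrightarrow> card Y \<le> card Z"
proof -
  let ?k = "LEAST k. \<exists>Y. Y \<subseteq> X \<and> P Y \<and> card Y = k"
  have ex: "\<exists>Y. Y \<subseteq> X \<and> P Y \<and> card Y = card X" using assms by auto
  obtain Y where Y: "Y \<subseteq> X" "P Y" "card Y = ?k"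
    using LeastI_ex[of "\<lambda>k. \<exists>Y. Y \<subseteq> X \<and> P Y \<and> card Y = k"] ex by blast
  have "card Y \<le> card Z" if "Z \<subseteq> X" "P Z" for Z
    using Y(3) Least_le[of "\<lambda>k. \<exists>Y. Y \<subseteq> X \<and> P Y \<and> card Y = k" "card Z"] that by auto
  then show ?thesis using that Y by blast
qed

lemma circ_exists:
  assumes M: "matroid E ind" and B: "basis E ind B" and e: "e \<in> E" "e \<notin> B"
  shows "\<exists>C. circuit E ind C \<and> C \<subseteq> insert e B \<and> e \<in> C"
proof -
  have fE: "finite E" and sub: "\<And>X. ind X \<Longrightarrow> X \<subseteq> E" and down: "\<And>X Y. ind Y \<Longrightarrow> X \<subseteq> Y \<Longrightarrow> ind X"
    using M unfolding matroid_def by blast+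
  have iB: "ind B" and maxB: "\<And>X. ind X \<Longrightarrow> B \<subseteq> X \<Longrightarrow> X = B" using B unfolding basis_def by blast+
  have BE: "B \<subseteq> E" using sub iB .
  let ?X = "insert e B"
  have fX: "finite ?X" using BE e fE finite_subset by auto
  have dX: "\<not> ind ?X" using maxB[of ?X] e by auto
  obtain Y where Y: "Y \<subseteq> ?X" "\<not> ind Y" and mn: "\<And>Z. Z \<subseteq> ?X \<Longrightarrow> \<not> ind Z \<Longrightarrow> card Y \<le> card Z"
    using min_card_set[of ?X "\<lambda>Y. \<not> ind Y", OF fX dX] by blast
  have fY: "finite Y" using Y fX finite_subset by auto
  have "circuit E ind Y" unfolding circuit_def
  proof (intro conjI allI impI)
    show "Y \<subseteq> E" using Y BE e by auto
    show "\<not> ind Y" by fact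
    fix D assume "D \<subset> Y"
    then have "card D < card Y" using fY psubset_card_mono by auto
    then show "ind D" using mn[of D] \<open>D \<subset> Y\<close> Y by force
  qed
  moreover have "e \<in> Y"
  proof (rule ccontr)
    assume "e \<notin> Y" then have "Y \<subseteq> B" using Y by auto
    then show False using down[OF iB] Y by auto
  qed
  ultimately show ?thesis using Y by blast
qed

lemma cocirc_exists:
  assumes M: "matroid E ind" and B: "basis E ind B" and b: "b \<in> B"
  shows "\<exists>D. cocircuit E ind D \<and> D \<subseteq> insert b (E - B) \<and> b \<in> D"
proof -
  have fE: "finite E" and sub: "\<And>X. ind X \<Longrightarrow> X \<subseteq> E"
    using M unfolding matroid_def by blast+
  have iB: "ind B" using B unfolding basis_def by blast
  have BE: "B \<subseteq> E" using sub iB .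
  let ?X = "insert b (E - B)"
  let ?P = "\<lambda>Y. \<forall>B'. basis E ind B' \<longrightarrow> Y \<inter> B' \<noteq> {}"
  have fX: "finite ?X" using fE by auto
  have PX: "?P ?X"
  proof (intro allI impI)
    fix B' assume B': "basis E ind B'"
    show "?X \<inter> B' \<noteq> {}"
    proof
      assume dis: "?X \<inter> B' = {}"
      have "B' \<subseteq> E" using B' sub unfolding basis_def by blast
      then have "B' \<subseteq> B" "b \<notin> B'" using dis by auto
      then show False using B' iB b unfolding basis_def by blast
    qed
  qed
  obtain Y where Y: "Y \<subseteq> ?X" "?P Y" and mn: "\<And>Z. Z \<subseteq> ?X \<Longrightarrow> ?P Z \<Longrightarrow> card Y \<le> card Z"
    using min_card_set[of ?X ?P, OF fX PX] by blast
  have fY: "finite Y" using Y fX finite_subset by auto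
  have "cocircuit E ind Y" unfolding cocircuit_def
  proof (intro conjI allI impI)
    show "Y \<subseteq> E" using Y BE b by auto
    show "\<And>B'. basis E ind B' \<Longrightarrow> Y \<inter> B' \<noteq> {}" using Y by blast
    fix D assume "D \<subset> Y"
    then have "card D < card Y" using fY psubset_card_mono by auto
    then have "\<not> ?P D" using mn[of D] \<open>D \<subset> Y\<close> Y by force
    then show "\<exists>B. basis E ind B \<and> D \<inter> B = {}" by blast
  qed
  moreover have "b \<in> Y" using Y B by blast
  ultimately show ?thesis using Y by blast
qed

lemma coc_prop:
  assumes M: "matroid E ind" and B: "basis E ind B" and b: "b \<in> B"
    and adm: "admissible_fund_signing E ind B a"
  shows "cocircuit E ind (coc E ind B b) \<and> coc E ind B b \<subseteq> insert b (E - B) \<and> b \<in> coc E ind B b"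
proof -
  have fE: "finite E" using M unfolding matroid_def by blast
  let ?Q = "\<lambda>D. cocircuit E ind D \<and> D \<subseteq> insert b (E - B) \<and> b \<in> D"
  have inc: "D1 \<subseteq> D2" if 1: "?Q D1" and 2: "?Q D2" for D1 D2
  proof
    fix x assume x: "x \<in> D1"
    show "x \<in> D2"
    proof (cases "x = b")
      case True then show ?thesis using 2 by simp
    next
      case False
      then have xE: "x \<in> E" "x \<notin> B" using 1 x by auto
      obtain C where C: "circuit E ind C" "C \<subseteq> insert x B" "x \<in> C"
        using circ_exists[OF M B xE] by blast
      obtain e' where e': "e' \<in> C \<inter> D1" "e' \<noteq> x" using orth[OF adm fE C(1)] 1 x C(3) by blast
      then have "e' = b" using C(2) 1 by auto
      then obtain e'' where e'': "e'' \<in> C \<inter> D2" "e'' \<noteq> b"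
        using orth[OF adm fE C(1), of D2 b] 2 e' by blast
      then show ?thesis using C(2) 2 by auto
    qed
  qed
  obtain D where D: "?Q D" using cocirc_exists[OF M B b] by blast
  have "\<exists>!D. ?Q D" using D inc by (metis subset_antisym)
  then have "?Q (THE D. ?Q D)" by (rule theI')
  then show ?thesis unfolding coc_def .
qed

lemma ci_prop:
  assumes M: "matroid E ind" and B: "basis E ind B" and e: "e \<in> E" "e \<notin> B"
    and adm: "admissible_fund_signing E ind B a"
  shows "circuit E ind (ci E ind B e) \<and> ci E ind B e \<subseteq> insert e B"
proof -
  have fE: "finite E" and down: "\<And>X Y. ind Y \<Longrightarrow> X \<subseteq> Y \<Longrightarrow> ind X" using M unfolding matroid_def by blast+
  have iB: "ind B" using B unfolding basis_def by blast
  let ?Q = "\<lambda>C. circuit E ind C \<and> C \<subseteq> insert e B"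
  have ein: "e \<in> C" if "?Q C" for C
  proof (rule ccontr)
    assume "e \<notin> C" then have "C \<subseteq> B" using that by auto
    then show False using down[OF iB] that unfolding circuit_def by auto
  qed
  have inc: "C1 \<subseteq> C2" if 1: "?Q C1" and 2: "?Q C2" for C1 C2
  proof
    fix x assume x: "x \<in> C1"
    show "x \<in> C2"
    proof (cases "x = e")
      case True then show ?thesis using ein[OF 2] by simp
    next
      case False
      then have xB: "x \<in> B" using 1 x by auto
      obtain D where D: "cocircuit E ind D" "D \<subseteq> insert x (E - B)" "x \<in> D"
        using cocirc_exists[OF M B xB] by blast
      obtain e' where e': "e' \<in> C1 \<inter> D" "e' \<noteq> x" using orth[OF adm fE _ D(1)] 1 x D(3) by blast
      then have "e' = e" using D(2) 1 by auto
      then obtain e'' where e'': "e'' \<in> C2 \<inter> D" "e'' \<noteq> e"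
        using orth[OF adm fE _ D(1), of C2 e] 2 e' ein[OF 2] by blast
      then show ?thesis using D(2) 2 by auto
    qed
  qed
  obtain C where C: "?Q C" using circ_exists[OF M B e] by blast
  have "\<exists>!C. ?Q C" using C inc by (metis subset_antisym)
  then have "?Q (THE C. ?Q C)" by (rule theI')
  then show ?thesis unfolding ci_def .
qed

lemma sum_single_const:
  "finite S \<Longrightarrow> (\<Sum>j\<in>S. Poly_Mapping.single k (1::nat)) = Poly_Mapping.single k (card S)"
proof (induction S rule: finite_induct)
  case empty then show ?case by simp
next
  case (insert x F)
  then show ?case by (simp add: single_add[symmetric])
qed

theorem lemma4p2:
  fixes n r :: nat and ind :: "nat set \<Rightarrow> bool"
    and a :: "nat \<Rightarrow> nat \<Rightarrow> 'k::field" and C :: "nat set"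
  assumes "matroid {1..n} ind"
    and "regular {1..n} ind"
    and "r \<le> n"
    and "basis {1..n} ind {n - r + 1..n}"
    and "admissible_fund_signing {1..n} ind {n - r + 1..n} a"
    and "circuit {1..n} ind C"
  shows "Poly_Mapping.lookup (pC n r ind a C) (mC n r ind C) \<in> {1, -1}"
proof -
  let ?E = "{1..n}" and ?B = "{n - r + 1..n}"
  let ?K = "coc ?E ind ?B"
  note M = assms(1) and Bas = assms(4) and adm = assms(5) and Cc = assms(6)
  have fE: "finite ?E" by simp
  have down: "\<And>X Y. ind Y \<Longrightarrow> X \<subseteq> Y \<Longrightarrow> ind X" using M unfolding matroid_def by blast
  have iB: "ind ?B" using Bas unfolding basis_def by blast
  have BE: "?B \<subseteq> ?E" by auto
  have cocp: "\<And>j. j \<in> ?B \<Longrightarrow> cocircuit ?E ind (?K j) \<and> ?K j \<subseteq> insert j (?E - ?B) \<and> j \<in> ?K j"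
    using coc_prop[OF M Bas _ adm] by blast
  obtain sC sD :: "nat set \<Rightarrow> nat \<Rightarrow> 'k" where sD: "signing (cocircuit ?E ind) sD"
    and aeq: "\<forall>j\<in>?B. \<forall>i\<in>?E. a j i = sD (?K j) i"
    using adm unfolding admissible_fund_signing_def by blast
  have apm: "a j i \<in> {1,-1}" if j: "j \<in> ?B" and i: "i \<in> ?K j" for j i
  proof -
    have "i \<in> ?E" using cocp[OF j] i j by auto
    then have "a j i = sD (?K j) i" using aeq j by blast
    then show ?thesis using sD cocp[OF j] i unfolding signing_def by auto
  qed
  have cpm: "- (inverse (a j j) * a j i) \<in> {1,-1}" if j: "j \<in> ?B" and i: "i \<in> ?K j" for j i
    using pm1_coef[OF apm[OF j i] apm[OF j]] cocp[OF j] by blast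
  have CE: "C \<subseteq> ?E" using Cc unfolding circuit_def by blast
  have fC: "finite C" using CE finite_subset by blast
  define S where "S = cbar C"
  have SC: "S \<subseteq> C" unfolding S_def cbar_def by blast
  have fS: "finite S" using SC fC finite_subset by blast
  define A where "A j = (if j \<in> ?B then ?K j - {j} else {j})" for j
  define c where "c j l = (if j \<in> ?B then - (inverse (a j j) * a j l) else 1)" for j l
  have pCeq: "pC n r ind a C = (\<Prod>j\<in>S. \<Sum>l\<in>A j. Poly_Mapping.single (Poly_Mapping.single l (1::nat)) (c j l))"
    unfolding pC_def Let_def S_def[symmetric]
  proof (rule prod.cong[OF refl])
    fix j assume "j \<in> S"
    show "(if j \<in> ?B then - (\<Sum>i\<in>?K j - {j}. Poly_Mapping.single (Poly_Mapping.single i 1) (inverse (a j j) * a j i))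
          else Var j) = (\<Sum>l\<in>A j. Poly_Mapping.single (Poly_Mapping.single l (1::nat)) (c j l))"
    proof (cases "j \<in> ?B")
      case True
      then have "A j = ?K j - {j}" and "\<And>l. c j l = - (inverse (a j j) * a j l)" unfolding A_def c_def by (simp_all only: if_P[OF True] if_True)
      then show ?thesis unfolding if_P[OF True] by (simp add: single_uminus sum_negf)
    next
      case False
      then have "A j = {j}" and "\<And>l. c j l = 1" unfolding A_def c_def by (simp_all only: if_not_P[OF False] if_False)
      then show ?thesis unfolding if_not_P[OF False] by (simp add: Var_def)
    qed
  qed
  have Afin: "\<And>j. j \<in> S \<Longrightarrow> finite (A j)"
  proof -
    fix j assume "j \<in> S"
    show "finite (A j)"
    proof (cases "j \<in> ?B")
      case True
      then have "?K j \<subseteq> ?E" using cocp[OF True] by auto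
      then show ?thesis unfolding A_def using finite_subset fE by auto
    next
      case False
      then show ?thesis unfolding A_def by (simp only: if_not_P[OF False] if_False finite.emptyI finite_insert)
    qed
  qed
  show ?thesis
  proof (cases "\<exists>i\<in>{1..n - r}. C = ci ?E ind ?B i")
    case True
    then obtain i where i: "i \<in> {1..n - r}" "C = ci ?E ind ?B i" by blast
    have iEB: "i \<in> ?E" "i \<notin> ?B" using i(1) assms(3) by auto
    have CiB: "C \<subseteq> insert i ?B" using ci_prop[OF M Bas iEB adm] i(2) by simp
    have iC: "i \<in> C"
    proof (rule ccontr)
      assume "i \<notin> C" then have "C \<subseteq> ?B" using CiB by auto
      then show False using down[OF iB] Cc unfolding circuit_def by blast
    qed
    have the: "(THE i'. i' \<in> {1..n - r} \<and> C = ci ?E ind ?B i') = i"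
    proof (rule the_equality)
      show "i \<in> {1..n - r} \<and> C = ci ?E ind ?B i" using i by blast
      fix i' assume i': "i' \<in> {1..n - r} \<and> C = ci ?E ind ?B i'"
      have "i' \<in> ?E" "i' \<notin> ?B" using i' assms(3) by auto
      then have "C \<subseteq> insert i' ?B" using ci_prop[OF M Bas _ _ adm, of i'] i' by simp
      then show "i' = i" using iC iEB by auto
    qed
    have minC: "Min C = i"
    proof (rule Min_eqI[OF fC _ iC])
      fix y assume "y \<in> C"
      then show "i \<le> y" using CiB i(1) by auto
    qed
    have Sdef: "S = C - {i}" unfolding S_def cbar_def minC ..
    have SB: "S \<subseteq> ?B" using Sdef CiB by auto
    have mCeq: "mC n r ind C = (\<Sum>j\<in>S. Poly_Mapping.single ((\<lambda>j. i) j) (1::nat))"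
      unfolding mC_def Let_def using True the sum_single_const[OF fS, of i]
      by (simp add: S_def)
    have tin: "(\<lambda>j. i) j \<in> A j" if j: "j \<in> S" for j
    proof -
      have jB: "j \<in> ?B" using SB j by auto
      have jC: "j \<in> C" using SC j by auto
      obtain e' where e': "e' \<in> C \<inter> ?K j" "e' \<noteq> j"
        using orth[OF adm fE Cc _ jC] cocp[OF jB] by blast
      then have "e' = i" using cocp[OF jB] CiB by auto
      then show ?thesis using e' jB unfolding A_def by auto
    qed
    have uniq: "\<forall>j\<in>S. f j = (\<lambda>j. i) j"
      if "\<forall>j\<in>S. f j \<in> A j" and eq: "(\<Sum>j\<in>S. Poly_Mapping.single (f j) (1::nat)) = (\<Sum>j\<in>S. Poly_Mapping.single ((\<lambda>j. i) j) 1)" for f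
    proof
      fix j assume j: "j \<in> S"
      have l1: "Poly_Mapping.lookup (\<Sum>j\<in>S. Poly_Mapping.single (f j) (1::nat)) (f j) = card {j'\<in>S. f j' = f j}"
        by (rule lookup_sum_single_card[OF fS])
      have l2: "Poly_Mapping.lookup (\<Sum>j\<in>S. Poly_Mapping.single i (1::nat)) (f j) = card {j'\<in>S. i = f j}"
        by (rule lookup_sum_single_card[OF fS])
      have "card {j'\<in>S. f j' = f j} = card {j'\<in>S. i = f j}"
        using eq l1 l2 by simp
      moreover have "card {j'\<in>S. f j' = f j} \<noteq> 0" using j fS by auto
      ultimately show "f j = (\<lambda>j. i) j" by (cases "i = f j") auto
    qed
    have "Poly_Mapping.lookup (pC n r ind a C) (mC n r ind C) = (\<Prod>j\<in>S. c j ((\<lambda>j. i) j))"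
      unfolding pCeq mCeq by (rule coeff_prod_linear[OF fS Afin tin uniq])
    also have "\<dots> \<in> {1,-1}"
    proof (rule pm1_prod[OF fS])
      fix j assume j: "j \<in> S"
      then have "j \<in> ?B" using SB by auto
      then show "c j ((\<lambda>j. i) j) \<in> {1,-1}" using tin[OF j] cpm unfolding A_def c_def by auto
    qed
    finally show ?thesis .
  next
    case False
    let ?t = "dd ?E ind ?B"
    have mCeq: "mC n r ind C = (\<Sum>j\<in>S. Poly_Mapping.single (?t j) (1::nat))"
      unfolding mC_def Let_def using False by (simp add: S_def)
    have tprop: "?t j \<in> A j \<and> (\<forall>l\<in>A j. ?t j \<le> l)" if j: "j \<in> S" for j
    proof (cases "j \<in> ?B")
      case False
      have "A j = {j}" "?t j = j" unfolding A_def dd_def by (simp_all only: if_not_P[OF False] if_False)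
      then show ?thesis by simp
    next
      case jB: True
      have jC: "j \<in> C" using SC j by auto
      obtain e' where e': "e' \<in> C \<inter> ?K j" "e' \<noteq> j"
        using orth[OF adm fE Cc _ jC] cocp[OF jB] by blast
      have "?K j \<subseteq> ?E" using cocp[OF jB] jB by auto
      then have fK: "finite (?K j)" using finite_subset fE by blast
      have e'lt: "e' < j" using e' cocp[OF jB] jB by auto
      have "Min (?K j) \<le> e'" using Min_le[OF fK] e' by auto
      moreover have "Min (?K j) \<in> ?K j" using Min_in[OF fK] e' by auto
      moreover have "A j = ?K j - {j}" "?t j = Min (?K j)" unfolding A_def dd_def by (simp_all only: if_P[OF jB] if_True)
      ultimately show ?thesis using e'lt Min_le[OF fK] by auto
    qed
    have uniq: "\<forall>j\<in>S. f j = ?t j"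
      if fA: "\<forall>j\<in>S. f j \<in> A j" and eq: "(\<Sum>j\<in>S. Poly_Mapping.single (f j) (1::nat)) = (\<Sum>j\<in>S. Poly_Mapping.single (?t j) 1)" for f
    proof (rule ccontr)
      assume ne: "\<not> (\<forall>j\<in>S. f j = ?t j)"
      have le: "\<forall>j\<in>S. ?t j \<le> f j" using tprop fA by blast
      then have "\<exists>j\<in>S. ?t j < f j" using ne by (metis le_neq_implies_less)
      then have "(\<Sum>j\<in>S. ?t j) < (\<Sum>j\<in>S. f j)" using sum_strict_mono_ex1[OF fS le] by blast
      moreover have "(\<Sum>j\<in>S. f j) = (\<Sum>j\<in>S. ?t j)" by (rule sum_eq_from_single[OF fS eq])
      ultimately show False by simp
    qed
    have "Poly_Mapping.lookup (pC n r ind a C) (mC n r ind C) = (\<Prod>j\<in>S. c j (?t j))"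
      unfolding pCeq mCeq by (rule coeff_prod_linear[OF fS Afin _ uniq]) (use tprop in blast)+
    also have "\<dots> \<in> {1,-1}"
    proof (rule pm1_prod[OF fS])
      fix j assume j: "j \<in> S"
      show "c j (?t j) \<in> {1,-1}"
      proof (cases "j \<in> ?B")
        case True then show ?thesis using tprop[OF j] cpm unfolding A_def c_def by auto
      next
        case False
        then show ?thesis unfolding c_def by (simp only: if_not_P[OF False] if_False) simp
      qed
    qed
    finally show ?thesis .
  qed
qed

end
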